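(* Let $d,k\ge 1$ be integers. Let $z$ be a random vector in $\mathbb{R}^d$ with finite second moments whose covariance matrix $\Sigma\in\mathbb{R}^{d\times d}$ is positive definite, and let $\lambda_{\max}$ denote the largest eigenvalue of $\Sigma$. Let $W_c\in\mathbb{R}^{k\times d}$ be a random matrix, independent of $z$, with i.i.d. standard Gaussian entries, and set $g(z)=W_c z$. Fix any $w\in\mathbb{R}^d$, $b\in\mathbb{R}$ and let $f(z)=w^\top z+b$. For $\tilde w\in\mathbb{R}^k$, $\tilde b\in\mathbb{R}$ let $\tilde f(z)=\tilde w^\top g(z)+\tilde b$. Define $$E(k)=\mathbb{E}_{W_c}\Big[\min_{(\tilde w,\tilde b)\in\mathbb{R}^k\times\mathbb{R}}\ \mathbb{E}_z\big[|f(z)-\tilde f(z)|^2\big]\Big].$$ Then $$E(k)\le\begin{cases}\lambda_{\max}\left(1-\frac{k}{d}\right)\|w\|_2^2, & k<d,\\ 0, & k\ge d.\end{cases}$$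
   Context: Here $\mathbb{E}_z$ denotes expectation over the distribution of $z$ with $W_c$ held fixed, and $\mathbb{E}_{W_c}$ denotes expectation over the Gaussian matrix $W_c$. (Interpretation: $g$ is a randomly initialized linear "concept bottleneck layer" with $k$ concepts, and $\tilde f$ is a linear classifier on top of it.) *)

theory Defs
  imports "HOL-Probability.Probability"
begin

definition std_gaussian :: "real measure" where
  "std_gaussian = density lborel std_normal_density"

definition gaussian_matrix :: "(real ^ 'd ^ 'k) measure" where
  "gaussian_matrix =
     distr (PiM (UNIV :: ('k \<times> 'd) set) (\<lambda>_. std_gaussian)) borel
           (\<lambda>f. \<chi> i j. f (i, j))"

definition mean_vec :: "(real ^ 'd) measure \<Rightarrow> real ^ 'd" where
  "mean_vec M = (\<chi> i. \<integral>z. z $ i \<partial>M)"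

definition cov_matrix :: "(real ^ 'd) measure \<Rightarrow> real ^ 'd ^ 'd" where
  "cov_matrix M = (\<chi> i j. \<integral>z. (z $ i - mean_vec M $ i) * (z $ j - mean_vec M $ j) \<partial>M)"

definition pos_def_matrix :: "real ^ 'n ^ 'n \<Rightarrow> bool" where
  "pos_def_matrix A \<longleftrightarrow> (\<forall>v. v \<noteq> 0 \<longrightarrow> v \<bullet> (A *v v) > 0)"

definition is_eigenvalue :: "real ^ 'n ^ 'n \<Rightarrow> real \<Rightarrow> bool" where
  "is_eigenvalue A l \<longleftrightarrow> (\<exists>v. v \<noteq> 0 \<and> A *v v = l *\<^sub>R v)"

definition largest_eigenvalue :: "real ^ 'n ^ 'n \<Rightarrow> real" where
  "largest_eigenvalue A = Max {l. is_eigenvalue A l}"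

end

theory Submission
  imports Defs
begin


definition prj :: "(real ^ 'd) set \<Rightarrow> real ^ 'd \<Rightarrow> real ^ 'd" where
  "prj V x = (SOME y. y \<in> V \<and> (\<forall>u\<in>V. (x - y) \<bullet> u = 0))"

definition res :: "(real ^ 'd) set \<Rightarrow> real ^ 'd \<Rightarrow> real ^ 'd" where
  "res V x = x - prj V x"

lemma prj: assumes "subspace V" shows "prj V x \<in> V \<and> (\<forall>u\<in>V. (x - prj V x) \<bullet> u = 0)"
proof -
  obtain y z where "y \<in> span V" "\<And>w. w \<in> span V \<Longrightarrow> orthogonal z w" "x = y + z"
    using orthogonal_subspace_decomp_exists[of V x] by blast
  then have "\<exists>y. y \<in> V \<and> (\<forall>u\<in>V. (x - y) \<bullet> u = 0)"
    using assms by (metis add_diff_cancel_left' orthogonal_def span_eq_iff)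
  then show ?thesis unfolding prj_def by (rule someI_ex)
qed

lemma prj_unique: assumes "subspace V" "y \<in> V" "\<And>u. u \<in> V \<Longrightarrow> (x - y) \<bullet> u = 0"
  shows "prj V x = y"
proof -
  let ?p = "prj V x"
  have p: "?p \<in> V" "\<And>u. u \<in> V \<Longrightarrow> (x - ?p) \<bullet> u = 0" using prj[OF assms(1)] by auto
  have yp: "y - ?p \<in> V" using assms p by (simp add: subspace_diff)
  have "(x - ?p) \<bullet> (y - ?p) - (x - y) \<bullet> (y - ?p) = 0" using p(2)[OF yp] assms(3)[OF yp] by simp
  then have "(y - ?p) \<bullet> (y - ?p) = 0" by (simp add: inner_diff_left inner_diff_right)
  then show ?thesis by simp
qed

lemma res_orth: "subspace V \<Longrightarrow> u \<in> V \<Longrightarrow> res V x \<bullet> u = 0"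
  using prj unfolding res_def by blast

lemma prj_in: "subspace V \<Longrightarrow> prj V x \<in> V"
  using prj by blast

lemma prj_add: assumes "subspace V" shows "prj V (x + y) = prj V x + prj V y"
  by (rule prj_unique[OF assms]) (use prj[OF assms, of x] prj[OF assms, of y] assms in
      \<open>auto simp: subspace_add algebra_simps inner_diff_left inner_add_left\<close>)

lemma prj_scale: assumes "subspace V" shows "prj V (c *\<^sub>R x) = c *\<^sub>R prj V x"
proof (rule prj_unique[OF assms])
  show "c *\<^sub>R prj V x \<in> V" using prj[OF assms, of x] assms by (simp add: subspace_scale)
  fix u assume "u \<in> V"
  then have "(x - prj V x) \<bullet> u = 0" using prj[OF assms, of x] by blast
  then show "(c *\<^sub>R x - c *\<^sub>R prj V x) \<bullet> u = 0"
    by (metis inner_scaleR_left mult_zero_right scaleR_diff_right)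
qed

lemma res_add: "subspace V \<Longrightarrow> res V (x + y) = res V x + res V y"
  by (simp add: res_def prj_add)

lemma res_scale: "subspace V \<Longrightarrow> res V (c *\<^sub>R x) = c *\<^sub>R res V x"
  by (simp add: res_def prj_scale scaleR_diff_right)

lemma res_minus: "subspace V \<Longrightarrow> res V (- x) = - res V x"
  using res_scale[of V "-1" x] by simp

lemma res_diff: "subspace V \<Longrightarrow> res V (x - y) = res V x - res V y"
  by (metis diff_conv_add_uminus res_add res_minus)

lemma res_sum: "subspace V \<Longrightarrow> res V (\<Sum>i\<in>S. f i) = (\<Sum>i\<in>S. res V (f i))"
proof (induction S rule: infinite_finite_induct)
  case (infinite A) then show ?case by (simp add: res_def prj_unique subspace_0)
next
  case empty then show ?case by (simp add: res_def prj_unique subspace_0)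
next
  case (insert x F) then show ?case by (simp add: res_add)
qed

lemma res_inner: "subspace V \<Longrightarrow> res V x \<bullet> res V y = x \<bullet> res V y"
proof -
  assume V: "subspace V"
  have "prj V x \<bullet> res V y = 0" using res_orth[OF V prj_in[OF V]] by (simp add: inner_commute)
  then show ?thesis by (simp add: res_def inner_diff_left)
qed

lemma norm_res_le: assumes V: "subspace V" and u: "u \<in> V"
  shows "(norm (res V x))\<^sup>2 \<le> (norm (x - u))\<^sup>2"
proof -
  have e: "x - u = res V x + (prj V x - u)" by (simp add: res_def)
  have "prj V x - u \<in> V" using V u prj_in[OF V] by (simp add: subspace_diff)
  then have o: "res V x \<bullet> (prj V x - u) = 0" using res_orth[OF V] by blast
  have "(norm (x - u))\<^sup>2 = (norm (res V x))\<^sup>2 + (norm (prj V x - u))\<^sup>2"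
    unfolding e by (simp add: norm_add_Pythagorean o orthogonal_def)
  then show ?thesis by simp
qed

lemma norm_res_le_norm: "subspace V \<Longrightarrow> norm (res V x) \<le> norm x"
  using norm_res_le[of V 0 x] by (simp add: subspace_0)

lemma res_transport:
  assumes V: "subspace V" and F: "linear F" and Fi: "\<And>x y. F x \<bullet> F y = x \<bullet> y"
    and FG: "\<And>x. F (G x) = x"
  shows "res (F ` V) x = F (res V (G x))"
proof -
  have FV: "subspace (F ` V)" using V F by (simp add: linear_subspace_image)
  have "prj (F ` V) x = F (prj V (G x))"
  proof (rule prj_unique[OF FV])
    show "F (prj V (G x)) \<in> F ` V" using prj_in[OF V] by blast
    fix u assume "u \<in> F ` V"
    then obtain v where v: "v \<in> V" "u = F v" by blast
    have "x - F (prj V (G x)) = F (res V (G x))"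
      by (metis FG F linear_diff res_def)
    then show "(x - F (prj V (G x))) \<bullet> u = 0" using v Fi res_orth[OF V v(1)] by simp
  qed
  then show ?thesis unfolding res_def using F FG by (metis linear_diff)
qed



lemma prj_onb:
  fixes V :: "(real ^ 'd) set"
  assumes V: "subspace V" and BV: "B \<subseteq> V" and orth: "pairwise orthogonal B"
    and nB: "\<And>x. x \<in> B \<Longrightarrow> norm x = 1" and fB: "finite B" and sB: "span B = V"
  shows "prj V x = (\<Sum>b\<in>B. (b \<bullet> x) *\<^sub>R b)"
proof (rule prj_unique[OF V])
  show "(\<Sum>b\<in>B. (b \<bullet> x) *\<^sub>R b) \<in> V"
    using BV V by (intro subspace_sum[OF V]) (auto intro: subspace_scale)
  fix u assume u: "u \<in> V"
  have "orthogonal (x - (\<Sum>b\<in>B. (b \<bullet> x) *\<^sub>R b)) u"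
  proof (rule orthogonal_to_span)
    show "u \<in> span B" using u sB by simp
    fix c assume c: "c \<in> B"
    have "(\<Sum>b\<in>B. (b \<bullet> x) *\<^sub>R b) \<bullet> c = (\<Sum>b\<in>B. (b \<bullet> x) * (b \<bullet> c))"
      by (simp add: inner_sum_left)
    also have "\<dots> = (\<Sum>b\<in>{c}. (b \<bullet> x) * (b \<bullet> c))"
      using c orth fB by (intro sum.mono_neutral_right) (auto simp: pairwise_def orthogonal_def)
    also have "\<dots> = c \<bullet> x" using nB[OF c] by (simp add: inner_commute power2_norm_eq_inner[symmetric])
    finally have "(\<Sum>b\<in>B. (b \<bullet> x) *\<^sub>R b) \<bullet> c = c \<bullet> x" .
    then show "orthogonal (x - (\<Sum>b\<in>B. (b \<bullet> x) *\<^sub>R b)) c"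
      unfolding orthogonal_def inner_diff_left by (simp add: inner_commute)
  qed
  then show "(x - (\<Sum>b\<in>B. (b \<bullet> x) *\<^sub>R b)) \<bullet> u = 0" by (simp add: orthogonal_def)
qed

lemma sum_res_axis:
  fixes V :: "(real ^ 'd) set"
  assumes V: "subspace V"
  shows "(\<Sum>i\<in>UNIV. (norm (res V (axis i (1::real))))\<^sup>2) = real CARD('d) - real (dim V)"
proof -
  obtain B where B: "B \<subseteq> V" "pairwise orthogonal B" "\<And>x. x \<in> B \<Longrightarrow> norm x = 1"
    "independent B" "card B = dim V" "span B = V"
    using orthonormal_basis_subspace[OF V] by blast
  have fB: "finite B" using B(4) by (simp add: independent_imp_finite)
  have P: "prj V x = (\<Sum>b\<in>B. (b \<bullet> x) *\<^sub>R b)" for x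
    using prj_onb[OF V B(1,2,3) fB B(6)] .
  have one: "(norm (res V (axis i (1::real))))\<^sup>2 = 1 - (\<Sum>b\<in>B. (b $ i)\<^sup>2)" for i
  proof -
    have "(norm (res V (axis i (1::real))))\<^sup>2 = axis i 1 \<bullet> res V (axis i 1)"
      by (simp add: power2_norm_eq_inner res_inner[OF V])
    also have "\<dots> = 1 - axis i 1 \<bullet> (\<Sum>b\<in>B. (b \<bullet> axis i 1) *\<^sub>R b)"
      by (simp add: res_def P inner_diff_right)
    also have "\<dots> = 1 - (\<Sum>b\<in>B. (b $ i)\<^sup>2)"
      by (simp add: inner_sum_right inner_axis inner_axis' power2_eq_square)
    finally show ?thesis .
  qed
  have nb: "(\<Sum>i\<in>UNIV. (b $ i)\<^sup>2) = 1" if "b \<in> B" for b :: "real ^ 'd"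
  proof -
    have "(\<Sum>i\<in>UNIV. (b $ i)\<^sup>2) = b \<bullet> b" by (simp add: inner_vec_def power2_eq_square)
    also have "\<dots> = 1" using B(3)[OF that] by (simp add: power2_norm_eq_inner[symmetric])
    finally show ?thesis .
  qed
  have "(\<Sum>i\<in>UNIV. (norm (res V (axis i (1::real))))\<^sup>2) = (\<Sum>i\<in>UNIV. 1 - (\<Sum>b\<in>B. (b $ i)\<^sup>2))"
    using one by simp
  also have "\<dots> = real CARD('d) - (\<Sum>b\<in>B. \<Sum>i\<in>UNIV. (b $ i)\<^sup>2)"
    by (simp add: sum_subtractf sum.swap[of _ UNIV B])
  also have "\<dots> = real CARD('d) - real (card B)" using nb by simp
  finally show ?thesis using B(5) by simp
qed

section \<open>Eigenvalues of symmetric matrices\<close>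

definition symm :: "real ^ 'n ^ 'n \<Rightarrow> bool" where
  "symm A \<longleftrightarrow> (\<forall>i j. A $ i $ j = A $ j $ i)"

lemma symm_inner: assumes "symm A" shows "x \<bullet> (A *v y) = (A *v x) \<bullet> y"
proof -
  have "x \<bullet> (A *v y) = (\<Sum>i\<in>UNIV. \<Sum>j\<in>UNIV. x $ i * A $ i $ j * y $ j)"
    by (simp add: inner_vec_def matrix_vector_mult_def sum_distrib_left mult.assoc)
  also have "\<dots> = (\<Sum>j\<in>UNIV. \<Sum>i\<in>UNIV. x $ i * A $ i $ j * y $ j)" by (rule sum.swap)
  also have "\<dots> = (\<Sum>j\<in>UNIV. (\<Sum>i\<in>UNIV. A $ j $ i * x $ i) * y $ j)"
  proof (intro sum.cong refl)
    fix j
    have "(\<Sum>i\<in>UNIV. x $ i * A $ i $ j * y $ j) = (\<Sum>i\<in>UNIV. A $ j $ i * x $ i * y $ j)"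
    proof (rule sum.cong[OF refl])
      fix i
      have s: "A $ i $ j = A $ j $ i" using assms unfolding symm_def by blast
      show "x $ i * A $ i $ j * y $ j = A $ j $ i * x $ i * y $ j" unfolding s by (simp add: mult_ac)
    qed
    then show "(\<Sum>i\<in>UNIV. x $ i * A $ i $ j * y $ j) = (\<Sum>i\<in>UNIV. A $ j $ i * x $ i) * y $ j"
      by (simp add: sum_distrib_right)
  qed
  also have "\<dots> = (A *v x) \<bullet> y"
    by (simp add: inner_vec_def matrix_vector_mult_def)
  finally show ?thesis .
qed

lemma eigen_finite: assumes A: "symm A" shows "finite {l. is_eigenvalue A l}"
proof -
  define E where "E = {l. is_eigenvalue A l}"
  define ev where "ev l = (SOME v. v \<noteq> 0 \<and> A *v v = l *\<^sub>R v)" for l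
  have ev: "ev l \<noteq> 0 \<and> A *v ev l = l *\<^sub>R ev l" if "l \<in> E" for l
  proof -
    have "\<exists>v. v \<noteq> 0 \<and> A *v v = l *\<^sub>R v" using that unfolding E_def is_eigenvalue_def by simp
    then show ?thesis unfolding ev_def by (rule someI_ex)
  qed
  have inj: "inj_on ev E"
  proof
    fix l1 l2 assume l12: "l1 \<in> E" "l2 \<in> E" "ev l1 = ev l2"
    have e1: "A *v ev l1 = l1 *\<^sub>R ev l1" "ev l1 \<noteq> 0" using ev[OF l12(1)] by auto
    have e2: "A *v ev l2 = l2 *\<^sub>R ev l2" using ev[OF l12(2)] by auto
    have "l1 *\<^sub>R ev l1 = A *v ev l1" using e1(1) by (rule sym)
    also have "\<dots> = l2 *\<^sub>R ev l1" by (simp only: l12(3) e2)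
    finally have "l1 *\<^sub>R ev l1 = l2 *\<^sub>R ev l1" .
    note this e1(2)
    then show "l1 = l2" by (simp add: scaleR_cancel_right)
  qed
  have po: "pairwise orthogonal (ev ` E)"
    unfolding pairwise_def
  proof clarify
    fix l1 l2 assume l: "l1 \<in> E" "l2 \<in> E" "ev l1 \<noteq> ev l2"
    then have ne: "l1 \<noteq> l2" by auto
    have "l2 * (ev l1 \<bullet> ev l2) = ev l1 \<bullet> (A *v ev l2)" using ev[OF l(2)] by simp
    also have "\<dots> = (A *v ev l1) \<bullet> ev l2" by (rule symm_inner[OF A])
    also have "\<dots> = l1 * (ev l1 \<bullet> ev l2)" using ev[OF l(1)] by simp
    finally show "orthogonal (ev l1) (ev l2)" using ne by (simp add: orthogonal_def)
  qed
  have "0 \<notin> ev ` E" using ev by auto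
  then have "independent (ev ` E)" using po by (simp add: pairwise_orthogonal_independent)
  then have "finite (ev ` E)" by (simp add: independent_imp_finite)
  then show ?thesis using inj finite_imageD unfolding E_def by blast
qed

lemma rayleigh_eigen:
  fixes A :: "real ^ 'n ^ 'n"
  assumes A: "symm A"
  shows "\<exists>m. is_eigenvalue A m \<and> (\<forall>v. v \<bullet> (A *v v) \<le> m * (norm v)\<^sup>2)"
proof -
  let ?q = "\<lambda>v. v \<bullet> (A *v v)"
  have cq: "continuous_on (sphere 0 1) ?q"
    by (intro continuous_intros)
  have ne: "sphere (0::real^'n) 1 \<noteq> {}"
    by (metis norm_axis_1 mem_sphere_0 empty_iff)
  obtain v0 where v0: "v0 \<in> sphere 0 1" "\<And>y. y \<in> sphere 0 1 \<Longrightarrow> ?q y \<le> ?q v0"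
    using continuous_attains_sup[OF compact_sphere ne cq] by blast
  define m where "m = ?q v0"
  have nv0: "norm v0 = 1" using v0(1) by simp
  have bound: "?q v \<le> m * (norm v)\<^sup>2" for v
  proof (cases "v = 0")
    case True then show ?thesis by simp
  next
    case False
    then have "v /\<^sub>R norm v \<in> sphere 0 1" by simp
    then have "?q (v /\<^sub>R norm v) \<le> m" using v0(2) m_def by blast
    moreover have "?q (v /\<^sub>R norm v) = ?q v / (norm v)\<^sup>2"
      by (simp add: matrix_vector_mult_scaleR power2_eq_square divide_inverse mult_ac)
    ultimately show ?thesis using False by (simp add: divide_le_eq mult.commute)
  qed
  define u where "u = A *v v0 - m *\<^sub>R v0"
  have v0v0: "v0 \<bullet> v0 = 1" using nv0 by (simp add: power2_norm_eq_inner[symmetric])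
  have uv0: "u \<bullet> v0 = 0"
  proof -
    have "u \<bullet> v0 = (A *v v0) \<bullet> v0 - m * (v0 \<bullet> v0)" by (simp add: u_def inner_diff_left)
    then show ?thesis by (simp add: v0v0 m_def inner_commute)
  qed
  have uAv0: "u \<bullet> (A *v v0) = u \<bullet> u"
  proof -
    have "u \<bullet> u = u \<bullet> (A *v v0 - m *\<^sub>R v0)" by (subst (2) u_def) simp
    also have "\<dots> = u \<bullet> (A *v v0)" by (simp add: inner_diff_right uv0)
    finally show ?thesis by simp
  qed
  define c where "c = u \<bullet> u"
  define e where "e = ?q u - m * c"
  have key: "2 * t * c + t\<^sup>2 * e \<le> 0" for t
  proof -
    have "?q (v0 + t *\<^sub>R u) \<le> m * (norm (v0 + t *\<^sub>R u))\<^sup>2" by (rule bound)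
    moreover have "(norm (v0 + t *\<^sub>R u))\<^sup>2 = 1 + t\<^sup>2 * c"
      using uv0 by (simp only: power2_norm_eq_inner)
        (simp add: inner_add_left inner_add_right v0v0 inner_commute[of v0 u] c_def power2_eq_square)
    moreover have "?q (v0 + t *\<^sub>R u) = m + 2 * t * c + t\<^sup>2 * ?q u"
    proof -
      have s: "v0 \<bullet> (A *v u) = u \<bullet> (A *v v0)" using symm_inner[OF A, of v0 u] by (simp add: inner_commute)
      show ?thesis
        by (simp add: matrix_vector_right_distrib matrix_vector_mult_scaleR inner_add_left inner_add_right
            s uAv0 m_def c_def power2_eq_square algebra_simps)
    qed
    ultimately show ?thesis unfolding e_def by (simp add: algebra_simps)
  qed
  have "c \<le> 0"
  proof (rule ccontr)
    assume "\<not> c \<le> 0"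
    then have cp: "c > 0" by simp
    define t where "t = c / (\<bar>e\<bar> + 1)"
    have tp: "t > 0" using cp by (simp add: t_def add_pos_nonneg)
    have "t * (2 * c + t * e) \<le> 0" using key[of t] by (simp add: power2_eq_square algebra_simps)
    then have h: "2 * c + t * e \<le> 0" using tp by (simp add: mult_le_0_iff)
    have "t * e \<ge> - t * \<bar>e\<bar>" using tp mult_left_mono[of "- \<bar>e\<bar>" e t] by simp
    moreover have "t * \<bar>e\<bar> \<le> c"
      using cp by (simp add: t_def field_simps)
    ultimately show False using h cp by linarith
  qed
  then have "u = 0" unfolding c_def using inner_ge_zero[of u] by (metis inner_eq_zero_iff order_antisym)
  then have "A *v v0 = m *\<^sub>R v0" by (simp add: u_def)
  moreover have "v0 \<noteq> 0" using nv0 by auto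
  ultimately have "is_eigenvalue A m" unfolding is_eigenvalue_def by blast
  then show ?thesis using bound by blast
qed

lemma quad_le_largest:
  fixes A :: "real ^ 'n ^ 'n"
  assumes A: "symm A"
  shows "v \<bullet> (A *v v) \<le> largest_eigenvalue A * (norm v)\<^sup>2"
proof -
  obtain m where m: "is_eigenvalue A m" "\<And>v. v \<bullet> (A *v v) \<le> m * (norm v)\<^sup>2"
    using rayleigh_eigen[OF A] by blast
  have "m \<le> largest_eigenvalue A"
    unfolding largest_eigenvalue_def using eigen_finite[OF A] m(1) by (intro Max_ge) auto
  then have "m * (norm v)\<^sup>2 \<le> largest_eigenvalue A * (norm v)\<^sup>2"
    by (simp add: mult_right_mono)
  then show ?thesis using m(2)[of v] by linarith
qed



lemma meas_nth: assumes "sets M = sets (borel :: (real^'d) measure)"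
  shows "(\<lambda>z::real^'d. z $ i) \<in> borel_measurable M"
proof -
  have "(\<lambda>z::real^'d. z $ i) \<in> borel_measurable borel"
    by (intro borel_measurable_continuous_onI continuous_intros)
  then show ?thesis unfolding measurable_cong_sets[OF assms refl] .
qed

lemma int_prod:
  fixes M :: "(real^'d) measure"
  assumes P: "prob_space M" and S: "sets M = sets borel" and I: "integrable M (\<lambda>z. norm z ^ 2)"
  shows "integrable M (\<lambda>z. (z $ i - c) * (z $ j - c'))"
proof -
  interpret prob_space M by fact
  have m[measurable]: "(\<lambda>z::real^'d. z $ l) \<in> borel_measurable M" for l using meas_nth[OF S] .
  have I2: "integrable M (\<lambda>z. 2 * norm z ^ 2 + 2 * (\<bar>c\<bar> + \<bar>c'\<bar>)^2)"
    using I by (intro Bochner_Integration.integrable_add integrable_mult_right) auto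
  show ?thesis
  proof (rule Bochner_Integration.integrable_bound[OF I2])
    show "(\<lambda>z. (z $ i - c) * (z $ j - c')) \<in> borel_measurable M" by measurable
    show "AE x in M. norm ((x $ i - c) * (x $ j - c')) \<le> norm (2 * norm x ^ 2 + 2 * (\<bar>c\<bar> + \<bar>c'\<bar>)^2)"
    proof (intro AE_I2)
      fix x :: "real^'d"
      have a: "\<bar>x $ l\<bar> \<le> norm x" for l by (rule component_le_norm_cart)
      have "\<bar>(x $ i - c) * (x $ j - c')\<bar> \<le> (norm x + (\<bar>c\<bar> + \<bar>c'\<bar>)) * (norm x + (\<bar>c\<bar> + \<bar>c'\<bar>))"
        unfolding abs_mult using a[of i] a[of j]
        by (intro mult_mono) (auto simp: abs_le_iff)
      also have "\<dots> \<le> 2 * norm x ^ 2 + 2 * (\<bar>c\<bar> + \<bar>c'\<bar>)^2"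
      proof -
        have "0 \<le> (norm x - (\<bar>c\<bar> + \<bar>c'\<bar>))^2" by simp
        then show ?thesis by (simp add: power2_eq_square algebra_simps)
      qed
      finally show "norm ((x $ i - c) * (x $ j - c')) \<le> norm (2 * norm x ^ 2 + 2 * (\<bar>c\<bar> + \<bar>c'\<bar>)^2)"
        by simp
    qed
  qed
qed

lemma cov_quad:
  fixes M :: "(real^'d) measure"
  assumes P: "prob_space M" and S: "sets M = sets borel" and I: "integrable M (\<lambda>z. norm z ^ 2)"
  shows "(\<integral>\<^sup>+z. ennreal ((v \<bullet> (z - mean_vec M))\<^sup>2) \<partial>M) = ennreal (v \<bullet> (cov_matrix M *v v))"
proof -
  let ?mu = "mean_vec M"
  have e: "(v \<bullet> (z - ?mu))\<^sup>2 = (\<Sum>i\<in>UNIV. \<Sum>j\<in>UNIV. v $ i * v $ j * ((z $ i - ?mu $ i) * (z $ j - ?mu $ j)))" for z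
    by (simp add: power2_eq_square inner_vec_def sum_product mult_ac)
  have int: "integrable M (\<lambda>z. (\<Sum>i\<in>UNIV. \<Sum>j\<in>UNIV. v $ i * v $ j * ((z $ i - ?mu $ i) * (z $ j - ?mu $ j))))"
    by (intro Bochner_Integration.integrable_sum integrable_mult_right int_prod[OF P S I])
  have "(\<integral>\<^sup>+z. ennreal ((v \<bullet> (z - ?mu))\<^sup>2) \<partial>M) = ennreal (\<integral>z. (v \<bullet> (z - ?mu))\<^sup>2 \<partial>M)"
  proof -
    have int': "integrable M (\<lambda>z. (v \<bullet> (z - ?mu))\<^sup>2)" unfolding e by (rule int)
    show ?thesis by (rule nn_integral_eq_integral[OF int']) simp
  qed
  also have "(\<integral>z. (v \<bullet> (z - ?mu))\<^sup>2 \<partial>M) =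
     (\<Sum>i\<in>UNIV. \<Sum>j\<in>UNIV. v $ i * v $ j * (\<integral>z. (z $ i - ?mu $ i) * (z $ j - ?mu $ j) \<partial>M))"
    unfolding e
    by (subst Bochner_Integration.integral_sum, use int_prod[OF P S I] in auto)+
  also have "\<dots> = v \<bullet> (cov_matrix M *v v)"
    by (simp add: cov_matrix_def inner_vec_def matrix_vector_mult_def sum_distrib_left mult_ac)
  finally show ?thesis .
qed



definition rsp :: "real ^ 'd ^ 'k \<Rightarrow> (real ^ 'd) set" where
  "rsp W = range (\<lambda>a. transpose W *v a)"

lemma subspace_rsp: "subspace (rsp W)"
  unfolding rsp_def by (intro linear_subspace_image matrix_vector_mul_linear subspace_UNIV)

lemma inner_mv_transpose: "a \<bullet> (W *v z) = (transpose W *v a) \<bullet> (z :: real^'d)"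
proof -
  have "a \<bullet> (W *v z) = (\<Sum>i\<in>UNIV. \<Sum>j\<in>UNIV. a $ i * W $ i $ j * z $ j)"
    by (simp add: inner_vec_def matrix_vector_mult_def sum_distrib_left mult.assoc)
  also have "\<dots> = (\<Sum>j\<in>UNIV. \<Sum>i\<in>UNIV. a $ i * W $ i $ j * z $ j)" by (rule sum.swap)
  also have "\<dots> = (transpose W *v a) \<bullet> z"
    by (simp add: inner_vec_def matrix_vector_mult_def transpose_def sum_distrib_left mult_ac)
  finally show ?thesis .
qed

lemma symm_cov: "symm (cov_matrix M)"
  unfolding symm_def cov_matrix_def by (simp add: mult.commute)

lemma pointwise_bound:
  fixes M :: "(real^'d) measure" and W :: "real ^ 'd ^ 'k"
  assumes P: "prob_space M" and S: "sets M = sets borel" and I: "integrable M (\<lambda>z. norm z ^ 2)"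
  shows "(INF p \<in> (UNIV :: ((real ^ 'k) \<times> real) set).
              \<integral>\<^sup>+ z. ennreal (\<bar>(w \<bullet> z + b) - (fst p \<bullet> (W *v z) + snd p)\<bar> ^ 2) \<partial>M)
         \<le> ennreal (largest_eigenvalue (cov_matrix M) * (norm (res (rsp W) w))\<^sup>2)"
proof -
  let ?V = "rsp W" and ?mu = "mean_vec M"
  let ?r = "res ?V w"
  obtain a where a: "transpose W *v a = prj ?V w"
    using prj_in[OF subspace_rsp, of W w] unfolding rsp_def by auto
  have a': "a v* W = prj ?V w" using a by simp
  define p where "p = (a, b + ?r \<bullet> ?mu)"
  have eq: "\<bar>(w \<bullet> z + b) - (fst p \<bullet> (W *v z) + snd p)\<bar> ^ 2 = (?r \<bullet> (z - ?mu))\<^sup>2" for z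
  proof -
    have "(w \<bullet> z + b) - (fst p \<bullet> (W *v z) + snd p) = ?r \<bullet> (z - ?mu)"
      by (simp add: p_def inner_mv_transpose a a' res_def inner_diff_left inner_diff_right)
    then show ?thesis by simp
  qed
  have "(INF p \<in> (UNIV :: ((real ^ 'k) \<times> real) set).
              \<integral>\<^sup>+ z. ennreal (\<bar>(w \<bullet> z + b) - (fst p \<bullet> (W *v z) + snd p)\<bar> ^ 2) \<partial>M)
        \<le> \<integral>\<^sup>+ z. ennreal (\<bar>(w \<bullet> z + b) - (fst p \<bullet> (W *v z) + snd p)\<bar> ^ 2) \<partial>M"
    by (rule INF_lower) simp
  also have "\<dots> = \<integral>\<^sup>+ z. ennreal ((?r \<bullet> (z - ?mu))\<^sup>2) \<partial>M" by (simp only: eq)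
  also have "\<dots> = ennreal (?r \<bullet> (cov_matrix M *v ?r))" by (rule cov_quad[OF P S I])
  also have "\<dots> \<le> ennreal (largest_eigenvalue (cov_matrix M) * (norm ?r)\<^sup>2)"
    by (intro ennreal_leI quad_le_largest symm_cov)
  finally show ?thesis .
qed



lemma gauss_prob: "prob_space std_gaussian"
  unfolding std_gaussian_def by (rule prob_space_normal_density) simp

lemma sets_gauss[measurable_cong]: "sets std_gaussian = sets borel"
  unfolding std_gaussian_def by simp

lemma space_gauss[simp]: "space std_gaussian = UNIV"
  unfolding std_gaussian_def by simp

lemma gauss_uminus: "distr std_gaussian std_gaussian uminus = std_gaussian"
proof -
  have eq: "(\<lambda>x. ennreal (std_normal_density (- x))) = (\<lambda>x. ennreal (std_normal_density x))"
    by (simp add: fun_eq_iff std_normal_density_def)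
  have "density (distr lborel borel uminus) (\<lambda>x. ennreal (std_normal_density x))
      = distr (density lborel (\<lambda>x. ennreal (std_normal_density (- x)))) borel uminus"
    by (rule density_distr) auto
  then have "density lborel (\<lambda>x. ennreal (std_normal_density x))
      = distr (density lborel (\<lambda>x. ennreal (std_normal_density x))) borel uminus"
    unfolding lborel_distr_uminus eq .
  then have "distr std_gaussian borel uminus = std_gaussian"
    unfolding std_gaussian_def by simp
  moreover have "distr std_gaussian std_gaussian uminus = distr std_gaussian borel uminus"
    by (rule distr_cong) (simp_all add: sets_gauss)
  ultimately show ?thesis by simp
qed

lemma gauss_sing: "emeasure std_gaussian {t} = 0"
  unfolding std_gaussian_def
  by (subst emeasure_density) (auto simp: nn_integral_indicator_singleton)

lemma PiM_coord_map:
  fixes M :: "'i \<Rightarrow> 'a measure"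
  assumes fin: "finite I" and P: "\<And>i. prob_space (M i)"
    and h: "\<And>i. h i \<in> measurable (M i) (M i)" and d: "\<And>i. distr (M i) (M i) (h i) = M i"
  shows "distr (PiM I M) (PiM I M) (\<lambda>f. \<lambda>i\<in>I. h i (f i)) = PiM I M"
proof -
  interpret product_prob_space M using P by (simp add: product_prob_space_def product_prob_space_axioms_def product_sigma_finite_def prob_space_imp_sigma_finite)
  have mh: "(\<lambda>f. \<lambda>i\<in>I. h i (f i)) \<in> measurable (PiM I M) (PiM I M)"
  proof (intro measurable_restrict)
    fix i assume "i \<in> I"
    show "(\<lambda>f. h i (f i)) \<in> measurable (PiM I M) (M i)"
      using measurable_compose[OF measurable_component_singleton[OF \<open>i \<in> I\<close>, where M=M] h[of i]] .
  qed
  show ?thesis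
  proof (rule PiM_eqI[OF fin])
    show "sets (distr (PiM I M) (PiM I M) (\<lambda>f. \<lambda>i\<in>I. h i (f i))) = sets (PiM I M)" by simp
    fix A assume A: "\<And>i. i \<in> I \<Longrightarrow> A i \<in> sets (M i)"
    have pre: "(\<lambda>f. \<lambda>i\<in>I. h i (f i)) -` Pi\<^sub>E I A \<inter> space (PiM I M) = Pi\<^sub>E I (\<lambda>i. h i -` A i \<inter> space (M i))"
      by (auto simp: space_PiM PiE_iff)
    have "emeasure (distr (PiM I M) (PiM I M) (\<lambda>f. \<lambda>i\<in>I. h i (f i))) (Pi\<^sub>E I A)
        = emeasure (PiM I M) (Pi\<^sub>E I (\<lambda>i. h i -` A i \<inter> space (M i)))"
      using A by (subst emeasure_distr[OF mh]) (auto simp: pre intro: sets_PiM_I_finite fin)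
    also have "\<dots> = (\<Prod>i\<in>I. emeasure (M i) (h i -` A i \<inter> space (M i)))"
      using A h fin by (intro emeasure_PiM) (auto simp: measurable_sets)
    also have "\<dots> = (\<Prod>i\<in>I. emeasure (M i) (A i))"
    proof (intro prod.cong refl)
      fix i assume "i \<in> I"
      have "emeasure (M i) (h i -` A i \<inter> space (M i)) = emeasure (distr (M i) (M i) (h i)) (A i)"
        using A[OF \<open>i \<in> I\<close>] h by (simp add: emeasure_distr)
      then show "emeasure (M i) (h i -` A i \<inter> space (M i)) = emeasure (M i) (A i)" using d by simp
    qed
    finally show "emeasure (distr (PiM I M) (PiM I M) (\<lambda>f. \<lambda>i\<in>I. h i (f i))) (Pi\<^sub>E I A) = (\<Prod>i\<in>I. emeasure (M i) (A i))" .
  qed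
qed

abbreviation PiG :: "('k \<times> 'd \<Rightarrow> real) measure" where
  "PiG \<equiv> PiM UNIV (\<lambda>_. std_gaussian)"

definition toMat :: "('k \<times> 'd \<Rightarrow> real) \<Rightarrow> real ^ 'd ^ 'k" where
  "toMat f = (\<chi> i j. f (i, j))"

lemma PiG_prob: "prob_space (PiG :: ('k::finite \<times> 'd::finite \<Rightarrow> real) measure)"
  by (intro prob_space_PiM gauss_prob)

lemma sets_PiG: "sets (PiG :: ('k::finite \<times> 'd::finite \<Rightarrow> real) measure) = sets borel"
proof -
  have "sets (PiG :: ('k \<times> 'd \<Rightarrow> real) measure) = sets (PiM UNIV (\<lambda>_::'k\<times>'d. borel :: real measure))"
    by (intro sets_PiM_cong) (simp_all add: sets_gauss)
  also have "\<dots> = sets borel" by (rule sets_PiM_equal_borel)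
  finally show ?thesis .
qed

lemma space_PiG[simp]: "space (PiG :: ('k::finite \<times> 'd::finite \<Rightarrow> real) measure) = UNIV"
  by (simp add: space_PiM)

lemma toMat_meas: "(toMat :: ('k::finite \<times> 'd::finite \<Rightarrow> real) \<Rightarrow> _) \<in> measurable PiG borel"
proof -
  have "(toMat :: ('k \<times> 'd \<Rightarrow> real) \<Rightarrow> _) \<in> borel_measurable borel"
    unfolding toMat_def
    by (intro borel_measurable_continuous_onI continuous_intros continuous_on_product_coordinates)
  then show ?thesis unfolding measurable_cong_sets[OF sets_PiG refl] .
qed

lemma gm_def: "gaussian_matrix = distr PiG borel toMat"
  unfolding gaussian_matrix_def toMat_def ..

lemma gm_prob: "prob_space (gaussian_matrix :: (real ^ 'd::finite ^ 'k::finite) measure)"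
  unfolding gm_def by (intro prob_space.prob_space_distr PiG_prob toMat_meas)

lemma sets_gm[measurable_cong]: "sets (gaussian_matrix :: (real ^ 'd::finite ^ 'k::finite) measure) = sets borel"
  unfolding gm_def by simp

lemma gm_invariant:
  fixes T :: "real ^ 'd::finite ^ 'k::finite \<Rightarrow> real ^ 'd ^ 'k"
  assumes T: "T \<in> borel_measurable borel" and phi: "\<phi> \<in> measurable PiG PiG"
    and comm: "\<And>f. T (toMat f) = toMat (\<phi> f)" and pres: "distr PiG PiG \<phi> = PiG"
  shows "distr gaussian_matrix borel T = gaussian_matrix"
proof -
  have "distr gaussian_matrix borel T = distr PiG borel (T \<circ> toMat)"
    unfolding gm_def by (rule distr_distr[OF T toMat_meas])
  also have "T \<circ> toMat = toMat \<circ> \<phi>" using comm by auto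
  also have "distr PiG borel (toMat \<circ> \<phi>) = distr (distr PiG PiG \<phi>) borel toMat"
    by (rule distr_distr[symmetric, OF toMat_meas phi])
  also have "\<dots> = gaussian_matrix" unfolding pres gm_def ..
  finally show ?thesis .
qed

lemma gm_integral_invariant:
  fixes T :: "real ^ 'd::finite ^ 'k::finite \<Rightarrow> real ^ 'd ^ 'k" and f :: "_ \<Rightarrow> real"
  assumes T: "T \<in> borel_measurable borel" and D: "distr gaussian_matrix borel T = gaussian_matrix"
    and f: "f \<in> borel_measurable borel"
  shows "(\<integral>W. f W \<partial>gaussian_matrix) = (\<integral>W. f (T W) \<partial>gaussian_matrix)"
proof -
  have T': "T \<in> measurable gaussian_matrix borel"
    using T by (simp add: measurable_cong_sets[OF sets_gm refl])
  have "(\<integral>W. f W \<partial>gaussian_matrix) = (\<integral>W. f W \<partial>distr gaussian_matrix borel T)" using D by simp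
  also have "\<dots> = (\<integral>W. f (T W) \<partial>gaussian_matrix)" by (rule integral_distr[OF T' f])
  finally show ?thesis .
qed

definition flipM :: "'d \<Rightarrow> real ^ 'd ^ 'k \<Rightarrow> real ^ 'd ^ 'k" where
  "flipM c W = (\<chi> r j. (if j = c then -1 else 1) * W $ r $ j)"

lemma flipM_invariant: "distr gaussian_matrix borel (flipM c) = (gaussian_matrix :: (real ^ 'd::finite ^ 'k::finite) measure)"
proof (rule gm_invariant)
  show "flipM c \<in> borel_measurable borel"
    unfolding flipM_def by (intro borel_measurable_continuous_onI continuous_intros) 
  let ?h = "\<lambda>x::'k\<times>'d. if snd x = c then (uminus :: real \<Rightarrow> real) else id"
  show "(\<lambda>f. \<lambda>x\<in>UNIV. ?h x (f x)) \<in> measurable PiG PiG"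
    by (intro measurable_restrict measurable_compose[OF measurable_component_singleton]) (auto simp: measurable_cong_sets[OF sets_gauss sets_gauss])
  show "flipM c (toMat f) = toMat (\<lambda>x\<in>UNIV. ?h x (f x))" for f
    by (simp add: flipM_def toMat_def vec_eq_iff)
  show "distr PiG PiG (\<lambda>f. \<lambda>x\<in>UNIV. ?h x (f x)) = PiG"
  proof (rule PiM_coord_map)
    show "?h i \<in> measurable std_gaussian std_gaussian" for i
      by (auto simp: measurable_cong_sets[OF sets_gauss sets_gauss])
    show "distr std_gaussian std_gaussian (?h i) = std_gaussian" for i
      using gauss_uminus by (auto simp: distr_id2[OF refl] id_def)
  qed (simp_all add: gauss_prob)
qed

definition swp :: "'d \<Rightarrow> 'd \<Rightarrow> 'd \<Rightarrow> 'd" where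
  "swp c1 c2 j = (if j = c1 then c2 else if j = c2 then c1 else j)"

lemma swp_swp[simp]: "swp c1 c2 (swp c1 c2 j) = j"
  by (simp add: swp_def)

lemma inj_swp: "inj (swp c1 c2)"
  by (metis injI swp_swp)

definition swapM :: "'d \<Rightarrow> 'd \<Rightarrow> real ^ 'd ^ 'k \<Rightarrow> real ^ 'd ^ 'k" where
  "swapM c1 c2 W = (\<chi> r j. W $ r $ swp c1 c2 j)"

lemma swapM_invariant: "distr gaussian_matrix borel (swapM c1 c2) = (gaussian_matrix :: (real ^ 'd::finite ^ 'k::finite) measure)"
proof (rule gm_invariant)
  show "swapM c1 c2 \<in> borel_measurable borel"
    unfolding swapM_def by (intro borel_measurable_continuous_onI continuous_intros)
  let ?s = "\<lambda>x::'k\<times>'d. (fst x, swp c1 c2 (snd x))"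
  have inj: "inj ?s" by (auto intro!: injI simp: prod_eq_iff dest: inj_swp[THEN injD])
  show "(\<lambda>f. \<lambda>x\<in>UNIV. f (?s x)) \<in> measurable PiG PiG"
    by (intro measurable_restrict measurable_component_singleton) simp
  show "swapM c1 c2 (toMat f) = toMat (\<lambda>x\<in>UNIV. f (?s x))" for f
    by (simp add: swapM_def toMat_def vec_eq_iff)
  show "distr PiG PiG (\<lambda>f. \<lambda>x\<in>UNIV. f (?s x)) = PiG"
    using distr_PiM_reindex[of UNIV "\<lambda>_. std_gaussian" ?s UNIV] inj gauss_prob by simp
qed



definition Dv :: "real ^ 'd \<Rightarrow> real ^ 'd ^ 'k \<Rightarrow> real" where
  "Dv v W = (norm (res (rsp W) v))\<^sup>2"

lemma linear_tmv: "linear (\<lambda>W::real^'d^'k. transpose W *v a)"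
  by (intro linearI) (simp_all add: vec_eq_iff matrix_vector_mult_def transpose_def sum.distrib sum_distrib_left algebra_simps)

lemma cont_tmv: "continuous_on S (\<lambda>W::real^'d^'k. transpose W *v a)"
  by (intro linear_continuous_on linear_conv_bounded_linear[THEN iffD1] linear_tmv)

definition Dc :: "(real ^ 'k) set" where
  "Dc = (SOME D. countable D \<and> (\<forall>X. open X \<longrightarrow> X \<noteq> {} \<longrightarrow> (\<exists>d\<in>D. d \<in> X)))"

lemma Dc: "countable (Dc :: (real^'k) set)" "\<And>X. open X \<Longrightarrow> X \<noteq> {} \<Longrightarrow> \<exists>d\<in>(Dc :: (real^'k) set). d \<in> X"
proof -
  have "\<exists>D::(real^'k) set. countable D \<and> (\<forall>X. open X \<longrightarrow> X \<noteq> {} \<longrightarrow> (\<exists>d\<in>D. d \<in> X))"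
    using countable_dense_exists by blast
  then have "countable (Dc :: (real^'k) set) \<and> (\<forall>X. open X \<longrightarrow> X \<noteq> {} \<longrightarrow> (\<exists>d\<in>(Dc :: (real^'k) set). d \<in> X))"
    unfolding Dc_def by (rule someI_ex)
  then show "countable (Dc :: (real^'k) set)" "\<And>X. open X \<Longrightarrow> X \<noteq> {} \<Longrightarrow> \<exists>d\<in>(Dc :: (real^'k) set). d \<in> X"
    by auto
qed

lemma Dv_inf:
  fixes W :: "real ^ 'd ^ 'k"
  shows "ennreal (Dv v W) = (INF a\<in>Dc. ennreal ((norm (v - transpose W *v a))\<^sup>2))"
proof (rule antisym)
  show "ennreal (Dv v W) \<le> (INF a\<in>Dc. ennreal ((norm (v - transpose W *v a))\<^sup>2))"
  proof (rule INF_greatest)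
    fix a :: "real^'k" assume "a \<in> Dc"
    have "transpose W *v a \<in> rsp W" unfolding rsp_def by blast
    then show "ennreal (Dv v W) \<le> ennreal ((norm (v - transpose W *v a))\<^sup>2)"
      unfolding Dv_def by (intro ennreal_leI norm_res_le subspace_rsp)
  qed
next
  obtain a0 where a0: "transpose W *v a0 = prj (rsp W) v"
    using prj_in[OF subspace_rsp, of W v] unfolding rsp_def by auto
  define \<phi> where "\<phi> a = (norm (v - transpose W *v a))\<^sup>2" for a
  have \<phi>0: "\<phi> a0 = Dv v W" unfolding \<phi>_def Dv_def res_def a0 ..
  have c\<phi>: "continuous_on UNIV \<phi>"
    unfolding \<phi>_def by (intro continuous_intros cont_tmv)
  show "(INF a\<in>Dc. ennreal (\<phi> a)) \<le> ennreal (Dv v W)" unfolding \<phi>_def[symmetric]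
  proof (rule ennreal_le_epsilon)
    fix e :: real assume e: "0 < e"
    have "open {a. \<phi> a < \<phi> a0 + e}"
      by (rule open_Collect_less[OF c\<phi>]) (intro continuous_intros)
    moreover have "a0 \<in> {a. \<phi> a < \<phi> a0 + e}" using e by simp
    ultimately obtain a where a: "a \<in> Dc" "\<phi> a < \<phi> a0 + e" using Dc(2) by blast
    have "(INF a\<in>Dc. ennreal (\<phi> a)) \<le> ennreal (\<phi> a)" using a(1) by (rule INF_lower)
    also have "\<dots> \<le> ennreal (\<phi> a0 + e)" using a(2) by (intro ennreal_leI) simp
    also have "\<dots> = ennreal (Dv v W) + ennreal e"
      using e \<phi>0 by (simp add: ennreal_plus Dv_def)
    finally show "(INF a\<in>Dc. ennreal (\<phi> a)) \<le> ennreal (Dv v W) + ennreal e" .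
  qed
qed

lemma Dv_meas: "(Dv v :: real^'d^'k \<Rightarrow> real) \<in> borel_measurable borel"
proof -
  have m: "(\<lambda>W::real^'d^'k. INF a\<in>Dc. ennreal ((norm (v - transpose W *v a))\<^sup>2)) \<in> borel_measurable borel"
  proof (rule borel_measurable_INF[OF Dc(1)])
    fix a :: "real^'k"
    show "(\<lambda>W::real^'d^'k. ennreal ((norm (v - transpose W *v a))\<^sup>2)) \<in> borel_measurable borel"
      by (intro measurable_compose[OF _ measurable_ennreal] borel_measurable_continuous_onI continuous_intros cont_tmv)
  qed
  have "Dv v = (\<lambda>W::real^'d^'k. enn2real (INF a\<in>Dc. ennreal ((norm (v - transpose W *v a))\<^sup>2)))"
    by (rule ext, subst Dv_inf[symmetric]) (simp add: Dv_def)
  then show ?thesis using m by simp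
qed

definition gij :: "'d \<Rightarrow> 'd \<Rightarrow> real ^ 'd ^ 'k \<Rightarrow> real" where
  "gij i j W = res (rsp W) (axis i 1) \<bullet> res (rsp W) (axis j 1)"

lemma gij_polar: "gij i j W = (Dv (axis i 1 + axis j 1) W - Dv (axis i 1 - axis j 1) W) / 4"
  unfolding gij_def Dv_def power2_norm_eq_inner
  by (simp add: res_add[OF subspace_rsp] res_diff[OF subspace_rsp] inner_add_left inner_add_right
      inner_diff_left inner_diff_right inner_commute)

lemma gij_meas: "(gij i j :: real^'d^'k \<Rightarrow> real) \<in> borel_measurable borel"
  unfolding gij_polar[abs_def] by (intro borel_measurable_divide borel_measurable_diff Dv_meas) simp

lemma gij_bound: "\<bar>gij i j W\<bar> \<le> 1"
proof -
  have "\<bar>gij i j W\<bar> \<le> norm (res (rsp W) (axis i (1::real))) * norm (res (rsp W) (axis j (1::real)))"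
    unfolding gij_def by (rule Cauchy_Schwarz_ineq2)
  also have "\<dots> \<le> 1 * 1"
    by (intro mult_mono) (auto intro: order.trans[OF norm_res_le_norm[OF subspace_rsp]])
  finally show ?thesis by simp
qed

lemma gij_int: "integrable (gaussian_matrix :: (real^'d::finite^'k::finite) measure) (gij i j)"
proof -
  interpret prob_space "gaussian_matrix :: (real^'d^'k) measure" by (rule gm_prob)
  show ?thesis
    by (rule integrable_const_bound[where B=1])
       (auto simp: gij_bound measurable_cong_sets[OF sets_gm refl] gij_meas)
qed

section \<open>Transport under column flips and swaps\<close>

definition flipV :: "'d \<Rightarrow> real ^ 'd \<Rightarrow> real ^ 'd" where
  "flipV c x = (\<chi> j. (if j = c then -1 else 1) * x $ j)"

lemma flipV_linear: "linear (flipV c)"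
  by (intro linearI) (simp_all add: flipV_def vec_eq_iff algebra_simps)

lemma flipV_inner: "flipV c x \<bullet> flipV c y = x \<bullet> y"
  unfolding flipV_def inner_vec_def by (simp, intro sum.cong refl, simp)

lemma flipV_flipV: "flipV c (flipV c x) = x"
  by (simp add: flipV_def vec_eq_iff)

lemma rsp_flipM: "rsp (flipM c W) = flipV c ` rsp W"
proof -
  have "transpose (flipM c W) *v a = flipV c (transpose W *v a)" for a
    by (simp add: flipM_def flipV_def vec_eq_iff matrix_vector_mult_def transpose_def sum_distrib_left mult_ac)
  then show ?thesis unfolding rsp_def by (auto simp: image_image)
qed

lemma res_flipM: "res (rsp (flipM c W)) x = flipV c (res (rsp W) (flipV c x))"
  unfolding rsp_flipM by (rule res_transport[OF subspace_rsp flipV_linear flipV_inner flipV_flipV])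

lemma gij_flip: "i \<noteq> j \<Longrightarrow> gij i j (flipM i W) = - gij i j W"
proof -
  assume ij: "i \<noteq> j"
  have a: "flipV i (axis i 1) = - axis i (1::real)" "flipV i (axis j 1) = axis j (1::real)"
    using ij by (auto simp: flipV_def vec_eq_iff axis_def)
  show ?thesis
    unfolding gij_def res_flipM flipV_inner a res_minus[OF subspace_rsp] by simp
qed

definition swapV :: "'d \<Rightarrow> 'd \<Rightarrow> real ^ 'd \<Rightarrow> real ^ 'd" where
  "swapV c1 c2 x = (\<chi> j. x $ swp c1 c2 j)"

lemma swapV_linear: "linear (swapV c1 c2)"
  by (intro linearI) (simp_all add: swapV_def vec_eq_iff)

lemma swapV_inner: "swapV c1 c2 x \<bullet> swapV c1 c2 y = x \<bullet> y"
proof -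
  have "swapV c1 c2 x \<bullet> swapV c1 c2 y = (\<Sum>j\<in>UNIV. x $ swp c1 c2 j * y $ swp c1 c2 j)"
    by (simp add: swapV_def inner_vec_def)
  also have "\<dots> = (\<Sum>j\<in>UNIV. x $ j * y $ j)"
  proof -
    have r: "range (swp c1 c2) = UNIV" by (metis surjI swp_swp)
    show ?thesis using sum.reindex[OF inj_swp, of "\<lambda>j. x $ j * y $ j" c1 c2] unfolding r by (simp add: o_def)
  qed
  finally show ?thesis by (simp add: inner_vec_def)
qed

lemma swapV_swapV: "swapV c1 c2 (swapV c1 c2 x) = x"
  by (simp add: swapV_def vec_eq_iff)

lemma rsp_swapM: "rsp (swapM c1 c2 W) = swapV c1 c2 ` rsp W"
proof -
  have "transpose (swapM c1 c2 W) *v a = swapV c1 c2 (transpose W *v a)" for a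
    by (simp add: swapM_def swapV_def vec_eq_iff matrix_vector_mult_def transpose_def)
  then show ?thesis unfolding rsp_def by (auto simp: image_image)
qed

lemma res_swapM: "res (rsp (swapM c1 c2 W)) x = swapV c1 c2 (res (rsp W) (swapV c1 c2 x))"
  unfolding rsp_swapM by (rule res_transport[OF subspace_rsp swapV_linear swapV_inner swapV_swapV])

lemma gij_swap: "gij i i (swapM i j W) = gij j j W"
proof -
  have a: "swapV i j (axis i 1) = axis j (1::real)"
    by (auto simp: swapV_def vec_eq_iff axis_def swp_def)
  show ?thesis unfolding gij_def res_swapM swapV_inner a ..
qed



lemma Dv_expand: "Dv w W = (\<Sum>i\<in>UNIV. \<Sum>j\<in>UNIV. w $ i * w $ j * gij i j W)"
proof -
  have w: "w = (\<Sum>i\<in>UNIV. w $ i *\<^sub>R axis i (1::real))"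
    using basis_expansion[of w] by (simp add: scalar_mult_eq_scaleR)
  have r: "res (rsp W) w = (\<Sum>i\<in>UNIV. w $ i *\<^sub>R res (rsp W) (axis i 1))"
    by (subst w) (simp add: res_sum[OF subspace_rsp] res_scale[OF subspace_rsp])
  have "res (rsp W) w \<bullet> res (rsp W) w = (\<Sum>i\<in>UNIV. w $ i * (res (rsp W) (axis i 1) \<bullet> res (rsp W) w))"
    by (subst (1) r) (simp only: inner_sum_left inner_scaleR_left)
  also have "\<dots> = (\<Sum>i\<in>UNIV. w $ i * (\<Sum>j\<in>UNIV. w $ j * gij i j W))"
    unfolding gij_def by (subst r) (simp only: inner_sum_right inner_scaleR_right)
  also have "\<dots> = (\<Sum>i\<in>UNIV. \<Sum>j\<in>UNIV. w $ i * w $ j * gij i j W)"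
    by (simp add: sum_distrib_left mult.assoc)
  finally show ?thesis unfolding Dv_def power2_norm_eq_inner .
qed

lemma integral_Dv:
  fixes w :: "real ^ 'd::finite"
  assumes AE: "AE W in (gaussian_matrix :: (real^'d::finite^'k::finite) measure). real m \<le> real (dim (rsp W))"
  shows "(\<integral>W. Dv w W \<partial>(gaussian_matrix :: (real^'d^'k) measure)) \<le> (1 - real m / real CARD('d)) * (norm w)\<^sup>2"
proof -
  interpret prob_space "gaussian_matrix :: (real^'d^'k) measure" by (rule gm_prob)
  let ?G = "gaussian_matrix :: (real^'d^'k) measure"
  have g0: "(\<integral>W. gij i j W \<partial>?G) = 0" if ij: "i \<noteq> j" for i j
  proof -
    have "(\<integral>W. gij i j W \<partial>?G) = (\<integral>W. gij i j (flipM i W) \<partial>?G)"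
      by (rule gm_integral_invariant[OF _ flipM_invariant gij_meas])
         (unfold flipM_def, intro borel_measurable_continuous_onI continuous_intros)
    also have "\<dots> = - (\<integral>W. gij i j W \<partial>?G)" using ij by (simp add: gij_flip)
    finally show ?thesis by simp
  qed
  have geq: "(\<integral>W. gij i i W \<partial>?G) = (\<integral>W. gij j j W \<partial>?G)" for i j
  proof -
    have "(\<integral>W. gij i i W \<partial>?G) = (\<integral>W. gij i i (swapM i j W) \<partial>?G)"
      by (rule gm_integral_invariant[OF _ swapM_invariant gij_meas])
         (unfold swapM_def, intro borel_measurable_continuous_onI continuous_intros)
    also have "\<dots> = (\<integral>W. gij j j W \<partial>?G)" by (simp add: gij_swap)
    finally show ?thesis .
  qed
  define c where "c = (\<integral>W. gij undefined undefined W \<partial>?G)"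
  have gii: "(\<integral>W. gij i i W \<partial>?G) = c" for i unfolding c_def by (rule geq)
  have gint: "(\<integral>W. gij i j W \<partial>?G) = (if i = j then c else 0)" for i j
    using g0 gii by auto
  have sumg: "(\<Sum>i\<in>UNIV. gij i i W) = real CARD('d) - real (dim (rsp W))" for W :: "real^'d^'k"
    using sum_res_axis[OF subspace_rsp, of W] by (simp add: gij_def power2_norm_eq_inner)
  have "real CARD('d) * c = (\<Sum>i\<in>UNIV. \<integral>W. gij i i W \<partial>?G)" by (simp add: gii)
  also have "\<dots> = (\<integral>W. (\<Sum>i\<in>UNIV. gij i i W) \<partial>?G)"
    by (rule Bochner_Integration.integral_sum[symmetric]) (rule gij_int)
  also have "\<dots> \<le> (\<integral>W. real CARD('d) - real m \<partial>?G)"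
  proof (rule integral_mono_AE)
    show "integrable ?G (\<lambda>W. \<Sum>i\<in>UNIV. gij i i W)" by (intro Bochner_Integration.integrable_sum gij_int)
    show "integrable ?G (\<lambda>W. real CARD('d) - real m)" by simp
    show "AE W in ?G. (\<Sum>i\<in>UNIV. gij i i W) \<le> real CARD('d) - real m"
      using AE by eventually_elim (simp add: sumg)
  qed
  also have "\<dots> = real CARD('d) - real m" by (simp add: prob_space)
  finally have cb: "c \<le> 1 - real m / real CARD('d)"
    by (simp add: field_simps)
  have "(\<integral>W. Dv w W \<partial>?G) = (\<Sum>i\<in>UNIV. \<Sum>j\<in>UNIV. w $ i * w $ j * (\<integral>W. gij i j W \<partial>?G))"
  proof -
    have int2: "integrable ?G (\<lambda>W. w $ i * w $ j * gij i j W)" for i j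
      by (intro integrable_mult_right gij_int)
    have int3: "integrable ?G (\<lambda>W. \<Sum>j\<in>UNIV. w $ i * w $ j * gij i j W)" for i
      by (intro Bochner_Integration.integrable_sum int2)
    show ?thesis
      unfolding Dv_expand
      by (simp add: Bochner_Integration.integral_sum[OF int3] Bochner_Integration.integral_sum[OF int2])
  qed
  also have "\<dots> = (\<Sum>i\<in>UNIV. w $ i * w $ i * c)"
    by (simp add: gint if_distrib sum.delta cong: if_cong)
  also have "\<dots> = c * (norm w)\<^sup>2"
    by (simp add: power2_norm_eq_inner inner_vec_def sum_distrib_left mult_ac)
  also have "\<dots> \<le> (1 - real m / real CARD('d)) * (norm w)\<^sup>2"
    using cb by (intro mult_right_mono) auto
  finally show ?thesis .
qed



definition dep :: "'k set \<Rightarrow> (real ^ 'd ^ 'k) set" where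
  "dep L = {W. \<exists>c::real^'k. c \<in> sphere 0 1 \<and> (\<forall>l. l \<notin> L \<longrightarrow> c $ l = 0) \<and> (\<Sum>l\<in>L. c $ l *\<^sub>R W $ l) = 0}"

lemma dep_closed: "closed (dep L :: (real ^ 'd::finite ^ 'k::finite) set)"
proof -
  let ?S = "sphere (0::real^'k) 1 \<inter> (\<Inter>l\<in>-L. {c. c $ l = 0})"
  let ?T = "{p :: (real^'k) \<times> (real^'d^'k). (\<Sum>l\<in>L. fst p $ l *\<^sub>R snd p $ l) = 0}"
  have "compact ?S"
    by (intro compact_Int_closed compact_sphere closed_INT) (auto intro!: closed_Collect_eq continuous_intros)
  moreover have "closed ?T"
    by (intro closed_Collect_eq continuous_intros)
  ultimately have "closed {y. \<exists>x. x \<in> ?S \<and> (x, y) \<in> ?T}"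
    by (rule closed_compact_projection)
  moreover have "{y. \<exists>x. x \<in> ?S \<and> (x, y) \<in> ?T} = dep L"
    unfolding dep_def by auto
  ultimately show ?thesis by simp
qed

lemma dep_empty[simp]: "dep {} = {}"
proof -
  have h: "\<exists>l. c $ l \<noteq> 0" if c: "c \<in> sphere (0::real^'k) 1" for c
  proof (rule ccontr)
    assume "\<not> (\<exists>l. c $ l \<noteq> 0)"
    then have "c = 0" by (simp add: vec_eq_iff)
    with c show False by simp
  qed
  show ?thesis unfolding dep_def using h by auto
qed

lemma not_dep_coeff:
  fixes W :: "real ^ 'd ^ 'k"
  assumes nd: "W \<notin> dep L" and supp: "\<forall>l. l \<notin> L \<longrightarrow> c $ l = 0" and s: "(\<Sum>l\<in>L. c $ l *\<^sub>R W $ l) = 0"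
  shows "c = 0"
proof (rule ccontr)
  assume c0: "c \<noteq> 0"
  let ?c = "c /\<^sub>R norm c"
  have "?c \<in> sphere 0 1" using c0 by simp
  moreover have "\<forall>l. l \<notin> L \<longrightarrow> ?c $ l = 0" using supp by simp
  moreover have "(\<Sum>l\<in>L. ?c $ l *\<^sub>R W $ l) = 0"
  proof -
    have "(\<Sum>l\<in>L. ?c $ l *\<^sub>R W $ l) = (1 / norm c) *\<^sub>R (\<Sum>l\<in>L. c $ l *\<^sub>R W $ l)"
      by (simp add: scaleR_sum_right divide_inverse)
    then show ?thesis using s by simp
  qed
  ultimately have "W \<in> dep L" unfolding dep_def by blast
  then show False using nd by simp
qed

lemma not_dep_dim:
  fixes W :: "real ^ 'd::finite ^ 'k::finite"
  assumes nd: "W \<notin> dep L"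
  shows "card L \<le> dim (rsp W)"
proof -
  have inj: "inj_on (\<lambda>l. W $ l) L"
  proof
    fix l1 l2 assume l: "l1 \<in> L" "l2 \<in> L" "W $ l1 = W $ l2"
    show "l1 = l2"
    proof (rule ccontr)
      assume ne: "l1 \<noteq> l2"
      let ?c = "axis l1 (1::real) - axis l2 1"
      have ax: "(\<Sum>l\<in>L. (axis a (1::real)) $ l *\<^sub>R W $ l) = W $ a" if "a \<in> L" for a
        using that by (subst sum.remove[of L a]) (auto simp: axis_def intro!: sum.neutral)
      have "(\<Sum>l\<in>L. ?c $ l *\<^sub>R W $ l) = (\<Sum>l\<in>L. (axis l1 (1::real)) $ l *\<^sub>R W $ l) - (\<Sum>l\<in>L. (axis l2 (1::real)) $ l *\<^sub>R W $ l)"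
        by (simp add: scaleR_diff_left sum_subtractf)
      also have "\<dots> = 0" using l by (simp add: ax)
      finally have "?c = 0" using l by (intro not_dep_coeff[OF nd]) (auto simp: axis_def)
      then show False using ne by (metis axis_eq_axis diff_eq_eq zero_neq_one add_0)
    qed
  qed
  have ind: "independent ((\<lambda>l. W $ l) ` L)"
  proof
    assume "dependent ((\<lambda>l. W $ l) ` L)"
    then obtain u where u: "\<exists>v\<in>(\<lambda>l. W $ l) ` L. u v \<noteq> 0" "(\<Sum>v\<in>(\<lambda>l. W $ l) ` L. u v *\<^sub>R v) = 0"
      using dependent_finite[of "(\<lambda>l. W $ l) ` L"] by auto
    define c where "c = (\<chi> l. if l \<in> L then u (W $ l) else 0)"
    have "(\<Sum>l\<in>L. c $ l *\<^sub>R W $ l) = (\<Sum>l\<in>L. u (W $ l) *\<^sub>R W $ l)"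
      by (simp add: c_def)
    also have "\<dots> = 0" using u(2) by (simp add: sum.reindex[OF inj])
    finally have "c = 0" by (intro not_dep_coeff[OF nd]) (auto simp: c_def)
    moreover obtain l where "l \<in> L" "u (W $ l) \<noteq> 0" using u(1) by auto
    ultimately show False by (metis (mono_tags, lifting) c_def vec_lambda_beta zero_index)
  qed
  have sub: "(\<lambda>l. W $ l) ` L \<subseteq> rsp W"
  proof
    fix x assume "x \<in> (\<lambda>l. W $ l) ` L"
    then obtain l where x: "x = W $ l" by auto
    have "transpose W *v axis l 1 = W $ l"
      by (simp add: vec_eq_iff matrix_vector_mult_def transpose_def axis_def if_distrib cong: if_cong)
    then show "x \<in> rsp W" unfolding rsp_def x by (metis rangeI)
  qed
  have "card L = card ((\<lambda>l. W $ l) ` L)" using inj by (simp add: card_image)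
  also have "\<dots> \<le> dim (rsp W)" by (rule independent_card_le_dim[OF sub ind])
  finally show ?thesis .
qed

lemma dep_step:
  fixes W :: "real ^ 'd::finite ^ 'k::finite"
  assumes j: "j \<notin> L" and W1: "W \<in> dep (insert j L)" and W2: "W \<notin> dep L"
  shows "W $ j \<in> span ((\<lambda>l. W $ l) ` L)"
proof -
  obtain c :: "real^'k" where c: "c \<in> sphere 0 1" "\<forall>l. l \<notin> insert j L \<longrightarrow> c $ l = 0"
    "(\<Sum>l\<in>insert j L. c $ l *\<^sub>R W $ l) = 0"
    using W1 unfolding dep_def by blast
  have s: "c $ j *\<^sub>R W $ j + (\<Sum>l\<in>L. c $ l *\<^sub>R W $ l) = 0"
    using c(3) j by (simp add: sum.insert)
  have cj: "c $ j \<noteq> 0"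
  proof
    assume "c $ j = 0"
    then have "\<forall>l. l \<notin> L \<longrightarrow> c $ l = 0" using c(2) by auto
    moreover have "(\<Sum>l\<in>L. c $ l *\<^sub>R W $ l) = 0" using s \<open>c $ j = 0\<close> by simp
    ultimately have "c = 0" by (rule not_dep_coeff[OF W2])
    then show False using c(1) by simp
  qed
  have "W $ j = (1 / c $ j) *\<^sub>R (c $ j *\<^sub>R W $ j)" using cj by simp
  also have "\<dots> = (1 / c $ j) *\<^sub>R (- (\<Sum>l\<in>L. c $ l *\<^sub>R W $ l))"
  proof -
    have s': "c $ j *\<^sub>R W $ j = - (\<Sum>l\<in>L. c $ l *\<^sub>R W $ l)" using s by (simp add: eq_neg_iff_add_eq_0)
    show ?thesis by (simp only: s')
  qed
  also have "\<dots> = (- 1 / c $ j) *\<^sub>R (\<Sum>l\<in>L. c $ l *\<^sub>R W $ l)" by simp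
  also have "\<dots> \<in> span ((\<lambda>l. W $ l) ` L)"
    by (intro span_mul span_sum span_mul span_base) auto
  finally show ?thesis .
qed



lemma hyper_null:
  fixes A :: "'i set" and a :: "'i \<Rightarrow> real"
  assumes fin: "finite A" and ii: "ii \<in> A" and a0: "a ii \<noteq> 0"
    and Y: "Y \<in> sets (PiM A (\<lambda>_. std_gaussian))" and sub: "\<And>y. y \<in> Y \<Longrightarrow> (\<Sum>i\<in>A. a i * y i) = 0"
  shows "emeasure (PiM A (\<lambda>_. std_gaussian)) Y = 0"
proof -
  interpret product_sigma_finite "\<lambda>_::'i. std_gaussian"
    by (simp add: product_sigma_finite_def prob_space_imp_sigma_finite gauss_prob)
  let ?M = "\<lambda>_::'i. std_gaussian"
  define I where "I = A - {ii}"
  have IJ: "I \<inter> {ii} = {}" "finite I" "finite {ii}" using fin by (auto simp: I_def)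
  have A: "A = I \<union> {ii}" using ii by (auto simp: I_def)
  have Y': "Y \<in> sets (PiM (I \<union> {ii}) ?M)" using Y A by simp
  have "emeasure (PiM A ?M) Y = (\<integral>\<^sup>+x. emeasure (PiM {ii} ?M) ((\<lambda>y. merge I {ii} (x,y)) -` Y \<inter> space (PiM {ii} ?M)) \<partial>PiM I ?M)"
    unfolding A by (rule emeasure_fold_integral[OF IJ Y'])
  also have "\<dots> = (\<integral>\<^sup>+x. 0 \<partial>PiM I ?M)"
  proof (rule nn_integral_cong)
    fix x assume x: "x \<in> space (PiM I ?M)"
    define t0 where "t0 = - (\<Sum>i\<in>I. a i * x i) / a ii"
    have "(\<lambda>y. merge I {ii} (x,y)) -` Y \<inter> space (PiM {ii} ?M) \<subseteq> PiE {ii} (\<lambda>_. {t0})"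
    proof
      fix y assume y: "y \<in> (\<lambda>y. merge I {ii} (x,y)) -` Y \<inter> space (PiM {ii} ?M)"
      then have yY: "merge I {ii} (x,y) \<in> Y" and ye: "y \<in> extensional {ii}"
        by (auto simp: space_PiM PiE_def)
      have "(\<Sum>i\<in>I \<union> {ii}. a i * merge I {ii} (x,y) i) = (\<Sum>i\<in>I. a i * merge I {ii} (x,y) i) + a ii * merge I {ii} (x,y) ii"
        using IJ by (simp add: sum.union_disjoint)
      also have "(\<Sum>i\<in>I. a i * merge I {ii} (x,y) i) = (\<Sum>i\<in>I. a i * x i)"
        using IJ by (intro sum.cong refl) auto
      also have "merge I {ii} (x,y) ii = y ii" using IJ by simp
      finally have "(\<Sum>i\<in>I. a i * x i) + a ii * y ii = 0"
        using sub[OF yY] A by simp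
      then have "y ii = t0" using a0 unfolding t0_def by (simp add: field_simps)
      then show "y \<in> PiE {ii} (\<lambda>_. {t0})" using ye unfolding PiE_def by auto
    qed
    then have "emeasure (PiM {ii} ?M) ((\<lambda>y. merge I {ii} (x,y)) -` Y \<inter> space (PiM {ii} ?M))
        \<le> emeasure (PiM {ii} ?M) (PiE {ii} (\<lambda>_. {t0}))"
      by (intro emeasure_mono sets_PiM_I_finite) auto
    also have "\<dots> = emeasure std_gaussian {t0}" by (subst emeasure_PiM) auto
    also have "\<dots> = 0" by (rule gauss_sing)
    finally show "emeasure (PiM {ii} ?M) ((\<lambda>y. merge I {ii} (x,y)) -` Y \<inter> space (PiM {ii} ?M)) = 0"
      by simp
  qed
  finally show ?thesis by simp
qed



lemma row_null:
  fixes L :: "'k::finite set" and j :: 'k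
  assumes j: "j \<notin> L" and cL: "card L < CARD('d::finite)"
  shows "emeasure (PiG :: ('k \<times> 'd \<Rightarrow> real) measure) (toMat -` (dep (insert j L) - dep L)) = 0"
proof -
  interpret product_sigma_finite "\<lambda>_::'k\<times>'d. std_gaussian"
    by (simp add: product_sigma_finite_def prob_space_imp_sigma_finite gauss_prob)
  let ?M = "\<lambda>_::'k\<times>'d. std_gaussian"
  define R where "R = {x::'k\<times>'d. fst x = j}"
  define I where "I = - R"
  have IJ: "I \<inter> R = {}" "finite I" "finite R" by (auto simp: I_def)
  have U: "(UNIV::('k\<times>'d) set) = I \<union> R" by (auto simp: I_def)
  let ?X = "toMat -` (dep (insert j L) - dep L :: (real^'d^'k) set)"
  have Xs0: "?X \<in> sets (PiG :: ('k \<times> 'd \<Rightarrow> real) measure)"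
  proof -
    have "(dep (insert j L) - dep L :: (real^'d^'k) set) \<in> sets borel"
      by (intro sets.Diff borel_closed dep_closed)
    from measurable_sets[OF toMat_meas this] show ?thesis by simp
  qed
  then have Xs: "?X \<in> sets (PiM (I \<union> R) ?M)" unfolding U .
  have "emeasure (PiM (I \<union> R) ?M) ?X = (\<integral>\<^sup>+x. emeasure (PiM R ?M) ((\<lambda>y. merge I R (x,y)) -` ?X \<inter> space (PiM R ?M)) \<partial>PiM I ?M)"
    by (rule emeasure_fold_integral[OF IJ Xs])
  also have "\<dots> = (\<integral>\<^sup>+x. 0 \<partial>PiM I ?M)"
  proof (rule nn_integral_cong)
    fix x assume x: "x \<in> space (PiM I ?M)"
    define Rl where "Rl l = (\<chi> c. x (l, c))" for l :: 'k
    have "dim (Rl ` L) \<le> card (Rl ` L)" by (rule dim_le_card') simp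
    also have "\<dots> \<le> card L" by (rule card_image_le) simp
    finally have "dim (Rl ` L) < DIM(real^'d)" using cL by simp
    then obtain a :: "real^'d" where a: "a \<noteq> 0" "\<And>y. y \<in> span (Rl ` L) \<Longrightarrow> orthogonal a y"
      using orthogonal_to_subspace_exists[of "Rl ` L"] by blast
    obtain c0 where c0: "a $ c0 \<noteq> 0" using a(1) by (auto simp: vec_eq_iff)
    let ?Y = "(\<lambda>y. merge I R (x,y)) -` ?X \<inter> space (PiM R ?M)"
    show "emeasure (PiM R ?M) ?Y = 0"
    proof (rule hyper_null[where a = "\<lambda>i. a $ snd i" and ii = "(j, c0)"])
      show "finite R" "(j,c0) \<in> R" "a $ snd (j,c0) \<noteq> 0" using c0 by (auto simp: R_def)
      have mm: "(\<lambda>y. merge I R (x,y)) \<in> measurable (PiM R ?M) (PiM (I \<union> R) ?M)"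
        using x by measurable
      show "?Y \<in> sets (PiM R ?M)" by (rule measurable_sets[OF mm Xs])
      fix y assume y: "y \<in> ?Y"
      let ?W = "toMat (merge I R (x,y))"
      have W: "?W \<in> dep (insert j L)" "?W \<notin> dep L" using y by auto
      have rows: "?W $ l = Rl l" if "l \<in> L" for l
        using that j by (auto simp: toMat_def Rl_def vec_eq_iff I_def R_def merge_def)
      have rowj: "?W $ j = (\<chi> c. y (j,c))"
        using IJ by (auto simp: toMat_def vec_eq_iff R_def)
      have "(\<lambda>l. ?W $ l) ` L = Rl ` L" using rows by auto
      then have "?W $ j \<in> span (Rl ` L)" using dep_step[OF j W] by simp
      then have "a \<bullet> (\<chi> c. y (j,c)) = 0" using a(2) rowj by (simp add: orthogonal_def)
      then have "(\<Sum>c\<in>UNIV. a $ c * y (j,c)) = 0" by (simp add: inner_vec_def)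
      moreover have "(\<Sum>i\<in>R. a $ snd i * y i) = (\<Sum>c\<in>UNIV. a $ c * y (j,c))"
      proof -
        have "R = (\<lambda>c. (j,c)) ` UNIV" by (auto simp: R_def image_iff)
        moreover have "inj (\<lambda>c::'d. (j,c))" by (auto intro: injI)
        ultimately show ?thesis by (simp add: sum.reindex)
      qed
      ultimately show "(\<Sum>i\<in>R. a $ snd i * y i) = 0" by simp
    qed
  qed
  finally show ?thesis unfolding U by simp
qed

lemma dep_null:
  fixes L :: "'k::finite set"
  assumes "card L \<le> CARD('d::finite)"
  shows "emeasure (PiG :: ('k \<times> 'd \<Rightarrow> real) measure) (toMat -` (dep L :: (real^'d^'k) set)) = 0"
proof -
  have "finite L" by simp
  then show ?thesis using assms
  proof (induction L rule: finite_induct)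
    case empty then show ?case by simp
  next
    case (insert j L)
    have cL: "card L < CARD('d)" using insert by simp
    have IH: "emeasure (PiG :: ('k \<times> 'd \<Rightarrow> real) measure) (toMat -` (dep L :: (real^'d^'k) set)) = 0"
      using insert cL by simp
    have ms: "toMat -` (A :: (real^'d^'k) set) \<in> sets (PiG :: ('k \<times> 'd \<Rightarrow> real) measure)" if "closed A" for A
      using measurable_sets[OF toMat_meas borel_closed[OF that]] by simp
    have ms2: "toMat -` (dep (insert j L) - dep L :: (real^'d^'k) set) \<in> sets (PiG :: ('k \<times> 'd \<Rightarrow> real) measure)"
      using measurable_sets[OF toMat_meas sets.Diff[OF borel_closed[OF dep_closed] borel_closed[OF dep_closed]]]
      by simp
    have "toMat -` (dep (insert j L) :: (real^'d^'k) set) \<subseteq> toMat -` dep L \<union> toMat -` (dep (insert j L) - dep L)"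
      by auto
    then have "emeasure (PiG :: ('k \<times> 'd \<Rightarrow> real) measure) (toMat -` (dep (insert j L) :: (real^'d^'k) set))
        \<le> emeasure PiG (toMat -` (dep L :: (real^'d^'k) set) \<union> toMat -` (dep (insert j L) - dep L))"
      by (intro emeasure_mono sets.Un ms ms2 dep_closed)
    also have "\<dots> \<le> emeasure PiG (toMat -` (dep L :: (real^'d^'k) set)) + emeasure PiG (toMat -` (dep (insert j L) - dep L :: (real^'d^'k) set))"
      by (intro emeasure_subadditive ms ms2 dep_closed)
    also have "\<dots> = 0" using IH row_null[OF insert(2) cL] by simp
    finally show ?case by simp
  qed
qed

lemma AE_dim:
  "AE W in (gaussian_matrix :: (real^'d::finite^'k::finite) measure).
      real (min CARD('k) CARD('d)) \<le> real (dim (rsp W))"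
proof -
  obtain L :: "'k set" where L: "card L = min CARD('k) CARD('d)"
    using obtain_subset_with_card_n[of "min CARD('k) CARD('d)" "UNIV :: 'k set"] by auto
  have ds: "(dep L :: (real^'d^'k) set) \<in> sets borel" by (intro borel_closed dep_closed)
  have "emeasure (gaussian_matrix :: (real^'d^'k) measure) (dep L) = emeasure PiG (toMat -` (dep L :: (real^'d^'k) set) \<inter> space PiG)"
    unfolding gm_def by (rule emeasure_distr[OF toMat_meas ds])
  also have "\<dots> = 0" using dep_null[where 'd='d, of L] L by simp
  finally have "dep L \<in> null_sets (gaussian_matrix :: (real^'d^'k) measure)"
    using ds by (intro null_setsI) (simp_all add: sets_gm)
  from AE_not_in[OF this] show ?thesis
  proof eventually_elim
    case (elim W)
    then show ?case using not_dep_dim[of W L] L by simp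
  qed
qed



theorem theorem1:
  fixes M :: "(real ^ 'd) measure"
    and w :: "real ^ 'd" and b :: real
  assumes "prob_space M"
    and "sets M = sets borel"
    and "integrable M (\<lambda>z. norm z ^ 2)"
    and "pos_def_matrix (cov_matrix M)"
  shows "(\<integral>\<^sup>+ W. (INF p \<in> (UNIV :: ((real ^ 'k) \<times> real) set).
              \<integral>\<^sup>+ z. ennreal (\<bar>(w \<bullet> z + b) - (fst p \<bullet> ((W :: real ^ 'd ^ 'k) *v z) + snd p)\<bar> ^ 2) \<partial>M)
           \<partial>gaussian_matrix)
         \<le> ennreal (if CARD('k) < CARD('d)
                     then largest_eigenvalue (cov_matrix M) * (1 - real CARD('k) / real CARD('d)) * (norm w)\<^sup>2
                     else 0)"
proof -
  let ?l = "largest_eigenvalue (cov_matrix M)"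
  let ?G = "gaussian_matrix :: (real^'d^'k) measure"
  interpret G: prob_space ?G by (rule gm_prob)
  have lpos: "?l > 0"
  proof -
    have "0 < axis undefined (1::real) \<bullet> (cov_matrix M *v axis undefined 1)"
      using assms(4) unfolding pos_def_matrix_def by (simp add: axis_eq_0_iff)
    also have "\<dots> \<le> ?l * (norm (axis undefined (1::real) :: real^'d))\<^sup>2"
      by (rule quad_le_largest[OF symm_cov])
    finally show ?thesis by simp
  qed
  have DvI: "integrable ?G (Dv w)"
  proof (rule G.integrable_const_bound[where B="(norm w)\<^sup>2"])
    show "AE W in ?G. norm (Dv w W) \<le> (norm w)\<^sup>2"
      by (intro AE_I2) (simp add: Dv_def power_mono norm_res_le_norm[OF subspace_rsp])
    show "Dv w \<in> borel_measurable ?G"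
      using Dv_meas by (simp add: measurable_cong_sets[OF sets_gm refl])
  qed
  define m where "m = min CARD('k) CARD('d)"
  have "(\<integral>\<^sup>+ W. (INF p \<in> (UNIV :: ((real ^ 'k) \<times> real) set).
              \<integral>\<^sup>+ z. ennreal (\<bar>(w \<bullet> z + b) - (fst p \<bullet> ((W :: real ^ 'd ^ 'k) *v z) + snd p)\<bar> ^ 2) \<partial>M)
           \<partial>?G) \<le> (\<integral>\<^sup>+ W. ennreal (?l * Dv w W) \<partial>?G)"
    by (intro nn_integral_mono) (unfold Dv_def, rule pointwise_bound[OF assms(1-3)])
  also have "\<dots> = ennreal (\<integral>W. ?l * Dv w W \<partial>?G)"
  proof -
    have "0 \<le> Dv w W" for W :: "real^'d^'k" by (simp add: Dv_def)
    then show ?thesis using DvI lpos by (intro nn_integral_eq_integral integrable_mult_right) auto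
  qed
  also have "\<dots> = ennreal (?l * (\<integral>W. Dv w W \<partial>?G))" by simp
  also have "\<dots> \<le> ennreal (?l * ((1 - real m / real CARD('d)) * (norm w)\<^sup>2))"
    using integral_Dv[OF AE_dim, of w] lpos unfolding m_def
    by (intro ennreal_leI mult_left_mono) auto
  also have "?l * ((1 - real m / real CARD('d)) * (norm w)\<^sup>2) =
      (if CARD('k) < CARD('d) then ?l * (1 - real CARD('k) / real CARD('d)) * (norm w)\<^sup>2 else 0)"
    by (auto simp: m_def min_def)
  finally show ?thesis .
qed

end
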